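(* Under any CLC choice model, for every seller $i\in\mathcal N$ and price $p_i$, the revenue $R_i(p_i,\mathbf p_{-i})$ is non-decreasing in $\mathbf p_{-i}$: if $\mathbf p'_{-i}\ge\mathbf p_{-i}$ componentwise, then $R_i(p_i,\mathbf p'_{-i})\ge R_i(p_i,\mathbf p_{-i})$.
   Context: CLC setup. There are $N$ sellers $\mathcal N=\{1,\dots,N\}$, each selling one item, and a unit mass of customers, each buying at most one item. Items have a price attribute (indexed $0$) and $K$ non-price attributes indexed by $\mathcal A=\{1,\dots,K\}$; $\bar{\mathcal A}=\{0\}\cup\mathcal A$. Non-price attribute $k$ takes values in an arbitrary set $\mathcal V^k$; prices lie in $\mathcal V=[0,\bar v]$ for a fixed $\bar v>0$. Seller $i$'s item has fixed non-price attribute values $v_i^k\in\mathcal V^k$ and price $p_i\in\mathcal V$ chosen by seller $i$; $\mathbf p=(p_1,\dots,p_N)$, and $v_i^0:=p_i$. Each customer $c$ has: a strict total order $\succ_c$ on $\bar{\mathcal A}$ (attribute importance); for each attribute $k$ a complete transitive weak preference $\succsim_c^k$ on its value set, with strict part $\succ_c^k$ and indifference $\sim_c^k$ (and $v\sim_c^k v$), where for price $p\succ_c^0p'$ iff $p<p'$ and $p\sim_c^0p'$ iff $p=p'$; a willingness-to-pay $w_c\in[0,\bar v]$; a set $\mathcal C_c\subseteq\mathcal V^1\times\cdots\times\mathcal V^K$ of admissible non-price attribute vectors; and a strict tie-breaking order over sellers. Customer $c$ lexicographically prefers item $i$ to item $j$ if there is an attribute $k$ with $v_i^{k'}\sim_c^{k'}v_j^{k'}$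 for all $k'\succ_c k$ and $v_i^k\succ_c^k v_j^k$; if no such $k$ exists, the tie-breaking order decides. Under the Consider-then-Choose with Lexicographic Choice (CLC) model, customer $c$ forms the consideration set $\mathcal N_c=\{i\in\mathcal N: p_i\le w_c,\ (v_i^1,\dots,v_i^K)\in\mathcal C_c\}$, buys nothing if it is empty, and otherwise buys the top-ranked item of $\mathcal N_c$ under this lexicographic order (with tie-breaking). An instance of CLC choice is a joint distribution $\mathcal G$ of these customer primitives; the conditional distribution of $w_c$ given the other primitives is assumed to have a Lipschitz continuous density. $D_i(\mathbf p)$ is the probability a customer buys from seller $i$ and $R_i(\mathbf p)=p_iD_i(\mathbf p)$ is seller $i$'s revenue, also written $R_i(p_i,\mathbf p_{-i})$. *)

theory Defs
  imports "HOL-Analysis.Analysis" "HOL-Probability.Probability"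
begin

text \<open>Sellers are 1..N, attributes are 0..K (0 = price, 1..K non-price).
  vattr i k : value of non-price attribute k of seller i (k in 1..K).
  p i : price of seller i.
  A customer is a pair (o, w): o carries the non-WTP primitives, w is the willingness-to-pay.
  imp o k k' : attribute k is strictly more important than k' for customer type o.
  pref o k a b : a is weakly preferred to b in non-price attribute k.
  C o : admissible non-price attribute vectors (functions on 1..K).
  tie o i j : seller i is ranked above seller j by the tie-breaking order.\<close>

definition attr_vec :: "nat \<Rightarrow> (nat \<Rightarrow> nat \<Rightarrow> 'v) \<Rightarrow> nat \<Rightarrow> (nat \<Rightarrow> 'v)" where
  "attr_vec K vattr i = restrict (vattr i) {1..K}"

definition attr_indiff ::
  "(nat \<Rightarrow> 'v \<Rightarrow> 'v \<Rightarrow> bool) \<Rightarrow> (nat \<Rightarrow> nat \<Rightarrow> 'v) \<Rightarrow> (nat \<Rightarrow> real) \<Rightarrow> nat \<Rightarrow> nat \<Rightarrow> nat \<Rightarrow> bool" where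
  "attr_indiff pr vattr p k i j =
     (if k = 0 then p i = p j
      else pr k (vattr i k) (vattr j k) \<and> pr k (vattr j k) (vattr i k))"

definition attr_strict ::
  "(nat \<Rightarrow> 'v \<Rightarrow> 'v \<Rightarrow> bool) \<Rightarrow> (nat \<Rightarrow> nat \<Rightarrow> 'v) \<Rightarrow> (nat \<Rightarrow> real) \<Rightarrow> nat \<Rightarrow> nat \<Rightarrow> nat \<Rightarrow> bool" where
  "attr_strict pr vattr p k i j =
     (if k = 0 then p i < p j
      else pr k (vattr i k) (vattr j k) \<and> \<not> pr k (vattr j k) (vattr i k))"

definition lex_prefers ::
  "nat \<Rightarrow> (nat \<Rightarrow> nat \<Rightarrow> bool) \<Rightarrow> (nat \<Rightarrow> 'v \<Rightarrow> 'v \<Rightarrow> bool) \<Rightarrow> (nat \<Rightarrow> nat \<Rightarrow> 'v)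
     \<Rightarrow> (nat \<Rightarrow> real) \<Rightarrow> nat \<Rightarrow> nat \<Rightarrow> bool" where
  "lex_prefers K imp pr vattr p i j =
     (\<exists>k\<in>{0..K}. (\<forall>k'\<in>{0..K}. imp k' k \<longrightarrow> attr_indiff pr vattr p k' i j)
                 \<and> attr_strict pr vattr p k i j)"

definition ranks_above ::
  "nat \<Rightarrow> (nat \<Rightarrow> nat \<Rightarrow> bool) \<Rightarrow> (nat \<Rightarrow> 'v \<Rightarrow> 'v \<Rightarrow> bool) \<Rightarrow> (nat \<Rightarrow> nat \<Rightarrow> bool)
     \<Rightarrow> (nat \<Rightarrow> nat \<Rightarrow> 'v) \<Rightarrow> (nat \<Rightarrow> real) \<Rightarrow> nat \<Rightarrow> nat \<Rightarrow> bool" where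
  "ranks_above K imp pr tie vattr p i j =
     (lex_prefers K imp pr vattr p i j \<or>
      (\<not> lex_prefers K imp pr vattr p i j \<and> \<not> lex_prefers K imp pr vattr p j i \<and> tie i j))"

definition consideration_set ::
  "nat \<Rightarrow> nat \<Rightarrow> (nat \<Rightarrow> 'v) set \<Rightarrow> real \<Rightarrow> (nat \<Rightarrow> nat \<Rightarrow> 'v) \<Rightarrow> (nat \<Rightarrow> real) \<Rightarrow> nat set" where
  "consideration_set N K C w vattr p = {i\<in>{1..N}. p i \<le> w \<and> attr_vec K vattr i \<in> C}"

definition buys ::
  "nat \<Rightarrow> nat \<Rightarrow> ('o \<Rightarrow> nat \<Rightarrow> nat \<Rightarrow> bool) \<Rightarrow> ('o \<Rightarrow> nat \<Rightarrow> 'v \<Rightarrow> 'v \<Rightarrow> bool)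
     \<Rightarrow> ('o \<Rightarrow> (nat \<Rightarrow> 'v) set) \<Rightarrow> ('o \<Rightarrow> nat \<Rightarrow> nat \<Rightarrow> bool) \<Rightarrow> (nat \<Rightarrow> nat \<Rightarrow> 'v)
     \<Rightarrow> (nat \<Rightarrow> real) \<Rightarrow> nat \<Rightarrow> 'o \<times> real \<Rightarrow> bool" where
  "buys N K imp pr C tie vattr p i x =
     (let t = fst x; w = snd x; S = consideration_set N K (C t) w vattr p in
       i \<in> S \<and> (\<forall>j\<in>S. j \<noteq> i \<longrightarrow> ranks_above K (imp t) (pr t) (tie t) vattr p i j))"

definition demand ::
  "('o \<times> real) measure \<Rightarrow> nat \<Rightarrow> nat \<Rightarrow> ('o \<Rightarrow> nat \<Rightarrow> nat \<Rightarrow> bool) \<Rightarrow> ('o \<Rightarrow> nat \<Rightarrow> 'v \<Rightarrow> 'v \<Rightarrow> bool)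
     \<Rightarrow> ('o \<Rightarrow> (nat \<Rightarrow> 'v) set) \<Rightarrow> ('o \<Rightarrow> nat \<Rightarrow> nat \<Rightarrow> bool) \<Rightarrow> (nat \<Rightarrow> nat \<Rightarrow> 'v)
     \<Rightarrow> (nat \<Rightarrow> real) \<Rightarrow> nat \<Rightarrow> real" where
  "demand M N K imp pr C tie vattr p i =
     measure M {x\<in>space M. buys N K imp pr C tie vattr p i x}"

definition revenue ::
  "('o \<times> real) measure \<Rightarrow> nat \<Rightarrow> nat \<Rightarrow> ('o \<Rightarrow> nat \<Rightarrow> nat \<Rightarrow> bool) \<Rightarrow> ('o \<Rightarrow> nat \<Rightarrow> 'v \<Rightarrow> 'v \<Rightarrow> bool)
     \<Rightarrow> ('o \<Rightarrow> (nat \<Rightarrow> 'v) set) \<Rightarrow> ('o \<Rightarrow> nat \<Rightarrow> nat \<Rightarrow> bool) \<Rightarrow> (nat \<Rightarrow> nat \<Rightarrow> 'v)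
     \<Rightarrow> (nat \<Rightarrow> real) \<Rightarrow> nat \<Rightarrow> real" where
  "revenue M N K imp pr C tie vattr p i = p i * demand M N K imp pr C tie vattr p i"

definition strict_total_on :: "'a set \<Rightarrow> ('a \<Rightarrow> 'a \<Rightarrow> bool) \<Rightarrow> bool" where
  "strict_total_on A r =
     ((\<forall>a\<in>A. \<not> r a a) \<and> (\<forall>a\<in>A. \<forall>b\<in>A. \<forall>c\<in>A. r a b \<longrightarrow> r b c \<longrightarrow> r a c)
      \<and> (\<forall>a\<in>A. \<forall>b\<in>A. a \<noteq> b \<longrightarrow> r a b \<or> r b a))"

definition weak_pref_on :: "'a set \<Rightarrow> ('a \<Rightarrow> 'a \<Rightarrow> bool) \<Rightarrow> bool" where
  "weak_pref_on A r =
     ((\<forall>a\<in>A. \<forall>b\<in>A. r a b \<or> r b a) \<and> (\<forall>a\<in>A. \<forall>b\<in>A. \<forall>c\<in>A. r a b \<longrightarrow> r b c \<longrightarrow> r a c))"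

end

theory Submission
  imports Defs
begin


lemma indiff_nz: "k \<noteq> 0 \<Longrightarrow> attr_indiff pr vattr p k a b = attr_indiff pr vattr q k a b"
  by (simp add: attr_indiff_def)
lemma strict_nz: "k \<noteq> 0 \<Longrightarrow> attr_strict pr vattr p k a b = attr_strict pr vattr q k a b"
  by (simp add: attr_strict_def)

lemma lex_up:
  assumes irr: "\<forall>a\<in>{0..K}. \<not> imp a a"
    and tr: "\<forall>a\<in>{0..K}. \<forall>b\<in>{0..K}. \<forall>c\<in>{0..K}. imp a b \<longrightarrow> imp b c \<longrightarrow> imp a c"
    and eqi: "p' i = p i" and lej: "p j \<le> p' j"
    and L: "lex_prefers K imp pr vattr p i j"
  shows "lex_prefers K imp pr vattr p' i j"
proof -
  from L obtain k where k: "k \<in> {0..K}" and H: "\<forall>k'\<in>{0..K}. imp k' k \<longrightarrow> attr_indiff pr vattr p k' i j"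
    and S: "attr_strict pr vattr p k i j" unfolding lex_prefers_def by blast
  have same: "lex_prefers K imp pr vattr p' i j" if "p' j = p j"
  proof -
    have "\<And>k'. attr_indiff pr vattr p k' i j = attr_indiff pr vattr p' k' i j"
      using that eqi by (simp add: attr_indiff_def)
    moreover have "attr_strict pr vattr p k i j = attr_strict pr vattr p' k i j"
      using that eqi by (simp add: attr_strict_def)
    ultimately show ?thesis using k H S unfolding lex_prefers_def by blast
  qed
  have zero: "lex_prefers K imp pr vattr p' i j" if lt: "p i < p' j"
      and T: "\<forall>k'\<in>{0..K}. imp k' 0 \<longrightarrow> k' \<noteq> 0 \<and> imp k' k"
  proof -
    have "\<forall>k'\<in>{0..K}. imp k' 0 \<longrightarrow> attr_indiff pr vattr p' k' i j"
    proof (intro ballI impI)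
      fix k' assume a: "k' \<in> {0..K}" "imp k' 0"
      with T have "k' \<noteq> 0" "imp k' k" by auto
      with H a have "attr_indiff pr vattr p k' i j" by blast
      with \<open>k' \<noteq> 0\<close> show "attr_indiff pr vattr p' k' i j" by (simp add: attr_indiff_def)
    qed
    moreover have "attr_strict pr vattr p' 0 i j" using lt eqi by (simp add: attr_strict_def)
    ultimately show ?thesis unfolding lex_prefers_def by (intro bexI[of _ 0]) auto
  qed
  show ?thesis
  proof (cases "k \<noteq> 0 \<and> \<not> imp 0 k")
    case True
    have "\<forall>k'\<in>{0..K}. imp k' k \<longrightarrow> attr_indiff pr vattr p' k' i j"
    proof (intro ballI impI)
      fix k' assume a: "k' \<in> {0..K}" "imp k' k"
      have "k' \<noteq> 0"
      proof
        assume "k' = 0" with a True show False by simp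
      qed
      with H a have "attr_indiff pr vattr p k' i j" by blast
      with \<open>k' \<noteq> 0\<close> show "attr_indiff pr vattr p' k' i j" by (simp add: attr_indiff_def)
    qed
    moreover have "attr_strict pr vattr p' k i j" using S True by (simp add: attr_strict_def)
    ultimately show ?thesis using k unfolding lex_prefers_def by blast
  next
    case False
    show ?thesis
    proof (cases "k = 0")
      case True
      then have "p i < p j" using S by (simp add: attr_strict_def)
      moreover have "\<forall>k'\<in>{0..K}. imp k' 0 \<longrightarrow> k' \<noteq> 0 \<and> imp k' k" using irr True by (metis atLeastAtMost_iff zero_le)
      ultimately show ?thesis using zero lej by simp
    next
      case nz: False
      with False have i0: "imp 0 k" by simp
      have "attr_indiff pr vattr p 0 i j" using H k i0 by simp
      then have "p i = p j" by (simp add: attr_indiff_def)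
      show ?thesis
      proof (cases "p' j = p j")
        case True then show ?thesis by (rule same)
      next
        case False
        have "\<forall>k'\<in>{0..K}. imp k' 0 \<longrightarrow> k' \<noteq> 0 \<and> imp k' k"
              proof (intro ballI impI)
      fix k' assume a: "k' \<in> {0..K}" "imp k' 0"
      have z: "(0::nat) \<in> {0..K}" by simp
      show "k' \<noteq> 0 \<and> imp k' k"
      proof
        show "k' \<noteq> 0"
        proof
          assume "k' = 0" with a z irr show False by blast
        qed
        show "imp k' k" using tr a z k i0 by blast
      qed
    qed
        then show ?thesis using zero False lej \<open>p i = p j\<close> by simp
      qed
    qed
  qed
qed

lemma lex_down:
  assumes irr: "\<forall>a\<in>{0..K}. \<not> imp a a"
    and tr: "\<forall>a\<in>{0..K}. \<forall>b\<in>{0..K}. \<forall>c\<in>{0..K}. imp a b \<longrightarrow> imp b c \<longrightarrow> imp a c"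
    and eqi: "p' i = p i" and lej: "p j \<le> p' j"
    and L: "lex_prefers K imp pr vattr p' j i"
  shows "lex_prefers K imp pr vattr p j i"
proof -
  from L obtain k where k: "k \<in> {0..K}" and H: "\<forall>k'\<in>{0..K}. imp k' k \<longrightarrow> attr_indiff pr vattr p' k' j i"
    and S: "attr_strict pr vattr p' k j i" unfolding lex_prefers_def by blast
  have zero: "lex_prefers K imp pr vattr p j i" if lt: "p j < p i"
      and T: "\<forall>k'\<in>{0..K}. imp k' 0 \<longrightarrow> k' \<noteq> 0 \<and> imp k' k"
  proof -
    have "\<forall>k'\<in>{0..K}. imp k' 0 \<longrightarrow> attr_indiff pr vattr p k' j i"
    proof (intro ballI impI)
      fix k' assume a: "k' \<in> {0..K}" "imp k' 0"
      with T have "k' \<noteq> 0" "imp k' k" by auto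
      with H a have "attr_indiff pr vattr p' k' j i" by blast
      with \<open>k' \<noteq> 0\<close> show "attr_indiff pr vattr p k' j i" by (simp add: attr_indiff_def)
    qed
    moreover have "attr_strict pr vattr p 0 j i" using lt by (simp add: attr_strict_def)
    ultimately show ?thesis unfolding lex_prefers_def by (intro bexI[of _ 0]) auto
  qed
  show ?thesis
  proof (cases "k \<noteq> 0 \<and> \<not> imp 0 k")
    case True
    have "\<forall>k'\<in>{0..K}. imp k' k \<longrightarrow> attr_indiff pr vattr p k' j i"
    proof (intro ballI impI)
      fix k' assume a: "k' \<in> {0..K}" "imp k' k"
      have "k' \<noteq> 0"
      proof
        assume "k' = 0" with a True show False by simp
      qed
      with H a have "attr_indiff pr vattr p' k' j i" by blast
      with \<open>k' \<noteq> 0\<close> show "attr_indiff pr vattr p k' j i" by (simp add: attr_indiff_def)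
    qed
    moreover have "attr_strict pr vattr p k j i" using S True by (simp add: attr_strict_def)
    ultimately show ?thesis using k unfolding lex_prefers_def by blast
  next
    case False
    show ?thesis
    proof (cases "k = 0")
      case True
      then have "p j < p i" using S eqi lej by (simp add: attr_strict_def)
      moreover have "\<forall>k'\<in>{0..K}. imp k' 0 \<longrightarrow> k' \<noteq> 0 \<and> imp k' k" using irr True by (metis atLeastAtMost_iff zero_le)
      ultimately show ?thesis using zero by simp
    next
      case nz: False
      with False have i0: "imp 0 k" by simp
      have "attr_indiff pr vattr p' 0 j i" using H k i0 by simp
      then have e: "p' j = p i" using eqi by (simp add: attr_indiff_def)
      show ?thesis
      proof (cases "p' j = p j")
        case True
        have "\<And>k'. attr_indiff pr vattr p k' j i = attr_indiff pr vattr p' k' j i"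
          using True eqi by (simp add: attr_indiff_def)
        moreover have "attr_strict pr vattr p k j i = attr_strict pr vattr p' k j i"
          using True eqi by (simp add: attr_strict_def)
        ultimately show ?thesis using k H S unfolding lex_prefers_def by blast
      next
        case False
        have "\<forall>k'\<in>{0..K}. imp k' 0 \<longrightarrow> k' \<noteq> 0 \<and> imp k' k"
              proof (intro ballI impI)
      fix k' assume a: "k' \<in> {0..K}" "imp k' 0"
      have z: "(0::nat) \<in> {0..K}" by simp
      show "k' \<noteq> 0 \<and> imp k' k"
      proof
        show "k' \<noteq> 0"
        proof
          assume "k' = 0" with a z irr show False by blast
        qed
        show "imp k' k" using tr a z k i0 by blast
      qed
    qed
        then show ?thesis using zero False lej e by simp
      qed
    qed
  qed
qed

theorem propositionB1:
  fixes M :: "('o \<times> real) measure" and Mo :: "'o measure"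
    and N K :: nat and vbar :: real
    and V :: "nat \<Rightarrow> 'v set" and vattr :: "nat \<Rightarrow> nat \<Rightarrow> 'v"
    and imp :: "'o \<Rightarrow> nat \<Rightarrow> nat \<Rightarrow> bool" and pr :: "'o \<Rightarrow> nat \<Rightarrow> 'v \<Rightarrow> 'v \<Rightarrow> bool"
    and C :: "'o \<Rightarrow> (nat \<Rightarrow> 'v) set" and tie :: "'o \<Rightarrow> nat \<Rightarrow> nat \<Rightarrow> bool"
    and f :: "'o \<Rightarrow> real \<Rightarrow> real"
    and p p' :: "nat \<Rightarrow> real" and i :: nat
  assumes vbar_pos: "vbar > 0"
    and vattr_in: "\<forall>j\<in>{1..N}. \<forall>k\<in>{1..K}. vattr j k \<in> V k"
    and prefs_wf: "\<forall>x\<in>space M.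
          strict_total_on {0..K} (imp (fst x))
        \<and> (\<forall>k\<in>{1..K}. weak_pref_on (V k) (pr (fst x) k))
        \<and> C (fst x) \<subseteq> PiE {1..K} V
        \<and> strict_total_on {1..N} (tie (fst x))
        \<and> snd x \<in> {0..vbar}"
    and prob: "prob_space M"
    and prob_o: "prob_space Mo"
    and disint: "\<forall>A\<in>sets M. emeasure M A =
          (\<integral>\<^sup>+ t. (\<integral>\<^sup>+ w. ennreal (f t w) * indicator A (t, w) \<partial>lborel) \<partial>Mo)"
    and dens_nonneg: "\<forall>t w. f t w \<ge> 0"
    and dens_supp: "\<forall>t. \<forall>w. w \<notin> {0..vbar} \<longrightarrow> f t w = 0"
    and dens_lip: "\<forall>t\<in>space Mo. \<exists>L. L-lipschitz_on {0..vbar} (f t)"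
    and meas: "\<forall>q j. (\<forall>l\<in>{1..N}. q l \<in> {0..vbar}) \<longrightarrow>
          {x\<in>space M. buys N K imp pr C tie vattr q j x} \<in> sets M"
    and i_in: "i \<in> {1..N}"
    and p_range: "\<forall>j\<in>{1..N}. p j \<in> {0..vbar}"
    and p'_range: "\<forall>j\<in>{1..N}. p' j \<in> {0..vbar}"
    and same_i: "p' i = p i"
    and ge: "\<forall>j\<in>{1..N}. j \<noteq> i \<longrightarrow> p j \<le> p' j"
  shows "revenue M N K imp pr C tie vattr p' i \<ge> revenue M N K imp pr C tie vattr p i"
  proof -
  have buy: "buys N K imp pr C tie vattr p' i x" if x: "x \<in> space M" and b: "buys N K imp pr C tie vattr p i x" for x
  proof -
    have so: "strict_total_on {0..K} (imp (fst x))" using prefs_wf[rule_format, OF x] by (rule conjunct1)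
    then have irr: "\<forall>a\<in>{0..K}. \<not> imp (fst x) a a"
      and tr: "\<forall>a\<in>{0..K}. \<forall>b\<in>{0..K}. \<forall>c\<in>{0..K}. imp (fst x) a b \<longrightarrow> imp (fst x) b c \<longrightarrow> imp (fst x) a c"
      unfolding strict_total_on_def by (blast, blast)
    have bdef: "\<And>q. buys N K imp pr C tie vattr q i x = (i \<in> consideration_set N K (C (fst x)) (snd x) vattr q \<and>
        (\<forall>j\<in>consideration_set N K (C (fst x)) (snd x) vattr q. j \<noteq> i \<longrightarrow> ranks_above K (imp (fst x)) (pr (fst x)) (tie (fst x)) vattr q i j))"
      by (simp add: buys_def Let_def)
    have cdef: "\<And>q j. j \<in> consideration_set N K (C (fst x)) (snd x) vattr q \<longleftrightarrow>
        j \<in> {1..N} \<and> q j \<le> snd x \<and> attr_vec K vattr j \<in> C (fst x)"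
      by (simp add: consideration_set_def)
    have iS: "i \<in> consideration_set N K (C (fst x)) (snd x) vattr p"
      and R: "\<forall>j\<in>consideration_set N K (C (fst x)) (snd x) vattr p. j \<noteq> i \<longrightarrow> ranks_above K (imp (fst x)) (pr (fst x)) (tie (fst x)) vattr p i j"
      using b bdef[of p] by blast+
    have iS': "i \<in> consideration_set N K (C (fst x)) (snd x) vattr p'" using iS same_i cdef by metis
    have "\<forall>j\<in>consideration_set N K (C (fst x)) (snd x) vattr p'. j \<noteq> i \<longrightarrow> ranks_above K (imp (fst x)) (pr (fst x)) (tie (fst x)) vattr p' i j"
    proof (intro ballI impI)
      fix j assume j: "j \<in> consideration_set N K (C (fst x)) (snd x) vattr p'" "j \<noteq> i"
      have jN: "j \<in> {1..N}" and jw: "p' j \<le> snd x" and jc: "attr_vec K vattr j \<in> C (fst x)"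
        using j(1) cdef by blast+
      have le: "p j \<le> p' j" using ge jN j(2) by blast
      have "j \<in> consideration_set N K (C (fst x)) (snd x) vattr p" using cdef jN jc le jw by force
      then have r: "ranks_above K (imp (fst x)) (pr (fst x)) (tie (fst x)) vattr p i j" using R j(2) by blast
      have u: "lex_prefers K (imp (fst x)) (pr (fst x)) vattr p i j \<Longrightarrow> lex_prefers K (imp (fst x)) (pr (fst x)) vattr p' i j"
        by (rule lex_up[OF irr tr same_i le])
      have d: "lex_prefers K (imp (fst x)) (pr (fst x)) vattr p' j i \<Longrightarrow> lex_prefers K (imp (fst x)) (pr (fst x)) vattr p j i"
        by (rule lex_down[OF irr tr same_i le])
      show "ranks_above K (imp (fst x)) (pr (fst x)) (tie (fst x)) vattr p' i j"
        using r u d unfolding ranks_above_def by blast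
    qed
    then show ?thesis using iS' bdef[of p'] by blast
  qed
  interpret P: prob_space M by (rule prob)
  have s': "{x\<in>space M. buys N K imp pr C tie vattr p' i x} \<in> sets M"
    using meas p'_range by simp
  have "demand M N K imp pr C tie vattr p i \<le> demand M N K imp pr C tie vattr p' i"
    unfolding demand_def
    by (rule P.finite_measure_mono) (use buy s' in blast)+
  moreover have "p i \<ge> 0" using p_range i_in by auto
  ultimately show ?thesis unfolding revenue_def using same_i by (metis mult_left_mono)
qed

end
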